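(* Let $A$ ($m_a\times n_a$) and $B$ ($m_b\times n_b$) be Hamming parity check matrices over $\mathbb{F}_q$ with $n_a=(q^{m_a}-1)/(q-1)\ge3$, $n_b=(q^{m_b}-1)/(q-1)\ge3$, and let $C=\{{\bf x}\in\mathbb{F}_q^{n_an_b}:(A\otimes B){\bf x}^t={\bf 0}\}$. Then for every ${\bf v}\in\mathbb{F}_q^{n_an_b}$, the Hamming distance from ${\bf v}$ to $C$ equals $\mathrm{rank}(B\,V_{\bf v}\,A^t)$ (equivalently, the rank of the main submatrix representation $M_{\bf v}$ when $A,B$ are normalized to have the standard basis vectors as their first columns).
   Context: A Hamming parity check matrix of size $m\times n$ over $\mathbb{F}_q$, $n=(q^m-1)/(q-1)$, has as columns one nonzero representative of each one-dimensional subspace of $\mathbb{F}_q^m$. $A\otimes B$ is the Kronecker product (each entry $a_{r,s}$ of $A$ replaced by the block $a_{r,s}B$). For ${\bf x}\in\mathbb{F}_q^{n_an_b}$, $V_{\bf x}$ is the $n_b\times n_a$ matrix with $(V_{\bf x})_{i,j}=x_{(j-1)n_b+i}$, so that $(A\otimes B){\bf x}^t={\bf 0}$ iff $BV_{\bf x}A^t=0$. $d({\bf v},C)=\min_{{\bf c}\in C}\mathrm{wt}({\bf v}-{\bf c})$ with $\mathrm{wt}$ the Hamming weight. *)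

theory Defs
  imports "Jordan_Normal_Form.DL_Rank"
begin

text \<open>Hamming parity check matrix of size m x n over the finite field 'a (q = card (UNIV :: 'a set)),
  n = (q^m - 1)/(q - 1): its columns are nonzero, and every nonzero vector of 'a^m is a
  scalar multiple of exactly one column (so the columns are one representative of each
  one-dimensional subspace).\<close>
definition hamming_pcm :: "'a::{finite,field} mat \<Rightarrow> nat \<Rightarrow> nat \<Rightarrow> bool" where
  "hamming_pcm H m n \<longleftrightarrow>
     n = (card (UNIV :: 'a set) ^ m - 1) div (card (UNIV :: 'a set) - 1) \<and>
     H \<in> carrier_mat m n \<and>
     (\<forall>j<n. col H j \<noteq> 0\<^sub>v m) \<and>
     (\<forall>y \<in> carrier_vec m. y \<noteq> 0\<^sub>v m \<longrightarrow> (\<exists>!j. j < n \<and> (\<exists>c. y = c \<cdot>\<^sub>v col H j)))"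

text \<open>Kronecker product: entry a_{r,s} of A replaced by the block a_{r,s} B.\<close>
definition kronecker :: "'a::times mat \<Rightarrow> 'a mat \<Rightarrow> 'a mat" where
  "kronecker A B = mat (dim_row A * dim_row B) (dim_col A * dim_col B)
     (\<lambda>(r, s). A $$ (r div dim_row B, s div dim_col B) * B $$ (r mod dim_row B, s mod dim_col B))"

definition Vmat :: "nat \<Rightarrow> nat \<Rightarrow> 'a vec \<Rightarrow> 'a mat" where
  "Vmat na nb x = mat nb na (\<lambda>(i, j). x $ (j * nb + i))"

definition hamming_wt :: "'a::zero vec \<Rightarrow> nat" where
  "hamming_wt v = card {i. i < dim_vec v \<and> v $ i \<noteq> 0}"

definition dist_to_code :: "'a::{zero,minus} vec \<Rightarrow> 'a vec set \<Rightarrow> nat" where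
  "dist_to_code v C = Min ((\<lambda>c. hamming_wt (v - c)) ` C)"

definition mat_rank :: "'a::field mat \<Rightarrow> nat" where
  "mat_rank M = vec_space.rank (dim_row M) M"

end

theory Submission
  imports Defs
begin


definition syn :: "'a::field mat \<Rightarrow> 'a mat \<Rightarrow> nat \<Rightarrow> nat \<Rightarrow> nat \<Rightarrow> 'a vec \<Rightarrow> nat set \<Rightarrow> 'a mat" where
 "syn A B ma mb nb x T = mat mb ma (\<lambda>(b,a). \<Sum>k\<in>T. x$k * B$$(b, k mod nb) * A$$(a, k div nb))"

lemma sum_split_prod: "(\<Sum>k<na*nb. g k) = (\<Sum>j<na. \<Sum>i<nb. g (j*nb+i::nat))"
proof (induction na)
  case 0 then show ?case by simp
next
  case (Suc na)
  have "(\<Sum>k<Suc na*nb. g k) = (\<Sum>k<na*nb + nb. g k)" by (simp add: add.commute)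
  also have "\<dots> = (\<Sum>k<na*nb. g k) + (\<Sum>k=na*nb..<na*nb+nb. g k)"
    by (simp add: sum.atLeastLessThan_concat[symmetric] lessThan_atLeast0)
  also have "(\<Sum>k=na*nb..<na*nb+nb. g k) = (\<Sum>i<nb. g (i+na*nb))"
    by (metis sum.shift_bounds_nat_ivl add_0 lessThan_atLeast0 add.commute)
  finally show ?case using Suc by (simp add: add.commute)
qed

lemma prod_syn:
  assumes A: "A \<in> carrier_mat ma na" and B: "B \<in> carrier_mat mb nb"
  shows "B * Vmat na nb x * transpose_mat A = syn A B ma mb nb x {..<na*nb}"
proof (rule eq_matI)
  show "dim_row (B * Vmat na nb x * transpose_mat A) = dim_row (syn A B ma mb nb x {..<na*nb})"
    using A B by (simp add: syn_def Vmat_def)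
  show "dim_col (B * Vmat na nb x * transpose_mat A) = dim_col (syn A B ma mb nb x {..<na*nb})"
    using A B by (simp add: syn_def Vmat_def)
  fix b a assume b: "b < dim_row (syn A B ma mb nb x {..<na*nb})" and a: "a < dim_col (syn A B ma mb nb x {..<na*nb})"
  hence b: "b < mb" and a: "a < ma" by (auto simp: syn_def)
  have "(B * Vmat na nb x * transpose_mat A) $$ (b,a) = (\<Sum>j<na. (\<Sum>i<nb. B$$(b,i) * x$(j*nb+i)) * A$$(a,j))"
    using A B a b by (simp add: Vmat_def scalar_prod_def atLeast0LessThan row_def col_def)
  also have "\<dots> = (\<Sum>j<na. \<Sum>i<nb. x$(j*nb+i) * B$$(b,(j*nb+i) mod nb) * A$$(a,(j*nb+i) div nb))"
    by (auto simp: sum_distrib_right intro!: sum.cong)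
  also have "\<dots> = syn A B ma mb nb x {..<na*nb} $$ (b,a)"
    using a b by (simp add: syn_def sum_split_prod)
  finally show "(B * Vmat na nb x * transpose_mat A) $$ (b,a) = syn A B ma mb nb x {..<na*nb} $$ (b,a)" .
qed



lemma kron_entry:
  assumes A: "A \<in> carrier_mat ma na" and B: "B \<in> carrier_mat mb nb" and x: "x \<in> carrier_vec (na*nb)"
    and r: "r < ma*mb"
  shows "(kronecker A B *\<^sub>v x) $ r = syn A B ma mb nb x {..<na*nb} $$ (r mod mb, r div mb)"
proof -
  have mb: "mb > 0" using r by (cases mb) auto
  have "r div mb < ma" using r by (simp add: less_mult_imp_div_less)
  moreover have "r mod mb < mb" using mb by simp
  ultimately show ?thesis using A B x r
    by (auto simp: kronecker_def syn_def scalar_prod_def atLeast0LessThan row_def mult.commute mult.left_commute intro!: sum.cong)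
qed

lemma kron_syn:
  assumes A: "A \<in> carrier_mat ma na" and B: "B \<in> carrier_mat mb nb" and x: "x \<in> carrier_vec (na*nb)"
    and mb: "mb > 0"
  shows "(kronecker A B *\<^sub>v x = 0\<^sub>v (ma*mb)) \<longleftrightarrow> syn A B ma mb nb x {..<na*nb} = 0\<^sub>m mb ma"
proof
  assume h: "kronecker A B *\<^sub>v x = 0\<^sub>v (ma*mb)"
  show "syn A B ma mb nb x {..<na*nb} = 0\<^sub>m mb ma"
  proof (rule eq_matI)
    fix b a assume "b < dim_row (0\<^sub>m mb ma :: 'a mat)" "a < dim_col (0\<^sub>m mb ma :: 'a mat)"
    hence b: "b < mb" and a: "a < ma" by auto
    have "(a+1)*mb \<le> ma*mb" using a by (intro mult_le_mono1) simp
    hence r: "a*mb+b < ma*mb" using b by simp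
    have "(kronecker A B *\<^sub>v x) $ (a*mb+b) = 0" using h r by simp
    moreover have "(a*mb+b) mod mb = b" "(a*mb+b) div mb = a" using b by auto
    ultimately show "syn A B ma mb nb x {..<na*nb} $$ (b,a) = 0\<^sub>m mb ma $$ (b,a)"
      using kron_entry[OF A B x r] a b by simp
  qed (auto simp: syn_def)
next
  assume h: "syn A B ma mb nb x {..<na*nb} = 0\<^sub>m mb ma"
  show "kronecker A B *\<^sub>v x = 0\<^sub>v (ma*mb)"
  proof (rule eq_vecI)
    show "dim_vec (kronecker A B *\<^sub>v x) = dim_vec (0\<^sub>v (ma*mb) :: 'a vec)"
      using A B by (simp add: kronecker_def)
    fix r assume "r < dim_vec (0\<^sub>v (ma*mb) :: 'a vec)"
    hence r: "r < ma*mb" by simp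
    have "r div mb < ma" using r by (simp add: less_mult_imp_div_less)
    moreover have "r mod mb < mb" using mb by simp
    ultimately show "(kronecker A B *\<^sub>v x) $ r = 0\<^sub>v (ma*mb) $ r"
      using kron_entry[OF A B x r] h r by simp
  qed
qed



lemma (in vec_space) rank_syn_le:
  assumes "finite T"
  shows "rank (syn A B ma n nb x T) \<le> card T"
  using assms
proof (induction T rule: finite_induct)
  case empty
  have "syn A B ma n nb x {} = 0\<^sub>m n ma" by (rule eq_matI) (auto simp: syn_def)
  then show ?case using rank_0I by simp
next
  case (insert k T)
  define R where "R = mat n ma (\<lambda>(b,a). (x$k * B$$(b, k mod nb)) * A$$(a, k div nb))"
  have eq: "syn A B ma n nb x (insert k T) = syn A B ma n nb x T + R"
    by (rule eq_matI) (use insert in \<open>auto simp: syn_def R_def\<close>)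
  have R1: "rank R \<le> 1"
    by (rule rank_le_1_product_entries[of R ma "\<lambda>b. x$k * B$$(b, k mod nb)" "\<lambda>a. A$$(a, k div nb)"])
       (auto simp: R_def)
  have "rank (syn A B ma n nb x (insert k T)) \<le> rank (syn A B ma n nb x T) + rank R"
    unfolding eq by (rule rank_subadditive) (auto simp: syn_def R_def)
  then show ?case using R1 insert by simp
qed

lemma syn_supp:
  assumes x: "x \<in> carrier_vec N"
  shows "syn A B ma mb nb x {..<N} = syn A B ma mb nb x {k. k < N \<and> x$k \<noteq> 0}"
  unfolding syn_def
  by (rule cong_mat) (auto intro!: sum.mono_neutral_right)

lemma card_supp: "x \<in> carrier_vec N \<Longrightarrow> card {k. k < N \<and> x$k \<noteq> 0} = hamming_wt x"
  by (simp add: hamming_wt_def)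

lemma (in vec_space) rank_le_wt:
  assumes x: "x \<in> carrier_vec N"
  shows "rank (syn A B ma n nb x {..<N}) \<le> hamming_wt x"
  using rank_syn_le[of "{k. k < N \<and> x$k \<noteq> 0}" A B ma nb x] syn_supp[OF x] card_supp[OF x] by simp

lemma syn_minus:
  assumes "x \<in> carrier_vec N" "y \<in> carrier_vec N"
  shows "syn A B ma mb nb (x - y) {..<N} = syn A B ma mb nb x {..<N} - syn A B ma mb nb y {..<N}"
  unfolding syn_def
  by (rule eq_matI) (use assms in \<open>auto simp: sum_subtractf algebra_simps intro!: sum.cong\<close>)




lemma (in vec_space) basis_cols:
  assumes M: "M \<in> carrier_mat n m"
  shows "\<exists>U. finite U \<and> U \<subseteq> carrier_vec n \<and> card U = rank M \<and> (\<forall>a<m. col M a \<in> span U)"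
proof -
  have e: "{} \<subseteq> carrier_vec n \<and> lin_indpt {}"
    by (metis (no_types) empty_subsetI fin_dim finite_basis_exists subset_li_is_li vec_vs vectorspace.basis_def)
  obtain S where S: "finite S" "maximal S (\<lambda>T. T \<subseteq> set (cols M) \<and> lin_indpt T)"
    using maximal_exists_superset[of "set (cols M)" "\<lambda>T. T \<subseteq> set (cols M) \<and> lin_indpt T" "{}"] e by blast
  have Ssub: "S \<subseteq> set (cols M)" and Sli: "lin_indpt S" using S(2) unfolding maximal_def by auto
  have colsC: "set (cols M) \<subseteq> carrier_vec n" using cols_dim M by blast
  hence SC: "S \<subseteq> carrier_vec n" using Ssub by blast
  have colin: "col M a \<in> span S" if a: "a < m" for a
  proof (rule ccontr)
    assume ns: "col M a \<notin> span S"
    have cin: "col M a \<in> set (cols M)" using a M by (simp add: cols_def)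
    have cC: "col M a \<in> carrier_vec n" using cin colsC by blast
    have "col M a \<notin> S" using ns in_own_span[OF SC] by blast
    have li: "lin_indpt (S \<union> {col M a})"
      using lin_dep_iff_in_span[OF SC Sli cC \<open>col M a \<notin> S\<close>] ns by simp
    have "S \<union> {col M a} \<subseteq> set (cols M)" using Ssub cin by simp
    with li have "S \<union> {col M a} = S" using S(2) unfolding maximal_def by (meson Un_upper1)
    thus False using \<open>col M a \<notin> S\<close> by auto
  qed
  have rk: "rank M = card S" using rank_card_indpt[OF M S(2)] .
  show ?thesis
    apply (rule exI[of _ S])
    using S(1) SC rk colin by simp
qed


lemma (in vec_space) span_insert_decomp:
  assumes U: "U \<subseteq> carrier_vec n" "finite U" and u: "u \<in> carrier_vec n" "u \<notin> U"
    and v: "v \<in> span (insert u U)"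
  shows "\<exists>c. v - c \<cdot>\<^sub>v u \<in> span U"
proof -
  have IU: "insert u U \<subseteq> carrier_vec n" using U u by simp
  have fin: "finite (insert u U)" using U by simp
  obtain f where f: "lincomb f (insert u U) = v"
    using finite_in_span[OF fin] IU v by fastforce
  have ins: "insert u U = U \<union> {u}" by simp
  have "lincomb f (U \<union> {u}) = f u \<cdot>\<^sub>v u + lincomb f U"
    by (rule lincomb_insert) (use U u in simp_all)
  hence veq: "v = f u \<cdot>\<^sub>v u + lincomb f U" using f unfolding ins by argo
  have lc: "lincomb f U \<in> carrier_vec n" by (rule lincomb_closed) (use U in simp_all)
  have "v - f u \<cdot>\<^sub>v u = lincomb f U" unfolding veq using lc u by auto
  moreover have "lincomb f U \<in> span U"
    unfolding finite_span[OF U(2) U(1)] by blast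
  ultimately show ?thesis by metis
qed



lemma sum_delta_mult: "k < (N::nat) \<Longrightarrow> (\<Sum>i<N. (if i = k then (g::'a::field) else 0) * h i) = g * h k"
  by (subst sum.remove[of _ k]) auto

lemma (in vec_space) upper:
  assumes A: "A \<in> carrier_mat ma na" "\<forall>y\<in>carrier_vec ma. y \<noteq> 0\<^sub>v ma \<longrightarrow> (\<exists>j<na. \<exists>c. y = c \<cdot>\<^sub>v col A j)"
    and B: "B \<in> carrier_mat n nb" "\<forall>y\<in>carrier_vec n. y \<noteq> 0\<^sub>v n \<longrightarrow> (\<exists>j<nb. \<exists>c. y = c \<cdot>\<^sub>v col B j)"
    and U: "finite U" "U \<subseteq> carrier_vec n"
  shows "\<forall>S \<in> carrier_mat n ma. (\<forall>a<ma. col S a \<in> span U) \<longrightarrow>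
     (\<exists>x\<in>carrier_vec (na*nb). hamming_wt x \<le> card U \<and> syn A B ma n nb x {..<na*nb} = S)"
  using U
proof (induction U rule: finite_induct)
  case empty
  show ?case
  proof (intro ballI impI)
    fix S :: "'a mat" assume S: "S \<in> carrier_mat n ma" and c: "\<forall>a<ma. col S a \<in> span {}"
    have "S = 0\<^sub>m n ma"
    proof (rule eq_matI)
      fix b a assume b: "b < dim_row (0\<^sub>m n ma :: 'a mat)" and a: "a < dim_col (0\<^sub>m n ma :: 'a mat)"
      have "col S a \<in> {0\<^sub>v n}" using c a span_empty by auto
      hence "col S a $ b = 0" using b by simp
      thus "S $$ (b,a) = 0\<^sub>m n ma $$ (b,a)" using a b S by simp
    qed (use S in auto)
    moreover have "syn A B ma n nb (0\<^sub>v (na*nb)) {..<na*nb} = 0\<^sub>m n ma"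
      by (rule eq_matI) (auto simp: syn_def)
    moreover have "hamming_wt (0\<^sub>v (na*nb) :: 'a vec) = 0" by (simp add: hamming_wt_def)
    ultimately show "\<exists>x\<in>carrier_vec (na*nb). hamming_wt x \<le> card {} \<and> syn A B ma n nb x {..<na*nb} = S"
      by (intro bexI[of _ "0\<^sub>v (na*nb)"]) auto
  qed
next
  case (insert u U)
  have UC: "U \<subseteq> carrier_vec n" and uC: "u \<in> carrier_vec n" using insert.prems by auto
  show ?case
  proof (intro ballI impI)
    fix S :: "'a mat" assume S: "S \<in> carrier_mat n ma" and c: "\<forall>a<ma. col S a \<in> span (insert u U)"
    have "\<forall>a<ma. \<exists>w. col S a - w \<cdot>\<^sub>v u \<in> span U"
      using span_insert_decomp[OF UC insert.hyps(1) uC insert.hyps(2)] c by blast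
    then obtain w where w: "\<And>a. a < ma \<Longrightarrow> col S a - w a \<cdot>\<^sub>v u \<in> span U" by metis
    define S' where "S' = mat n ma (\<lambda>(b,a). S$$(b,a) - w a * u$b)"
    have S'C: "S' \<in> carrier_mat n ma" by (simp add: S'_def)
    have "col S' a = col S a - w a \<cdot>\<^sub>v u" if a: "a < ma" for a
      by (rule eq_vecI) (use a S uC in \<open>auto simp: S'_def\<close>)
    hence "\<forall>a<ma. col S' a \<in> span U" using w by simp
    then obtain x' where x'C: "x' \<in> carrier_vec (na*nb)" and x'w: "hamming_wt x' \<le> card U"
      and x's: "syn A B ma n nb x' {..<na*nb} = S'"
      using insert.IH UC S'C by blast
    have cardU: "card (insert u U) = Suc (card U)" using insert.hyps by simp
    show "\<exists>x\<in>carrier_vec (na*nb). hamming_wt x \<le> card (insert u U) \<and> syn A B ma n nb x {..<na*nb} = S"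
    proof (cases "u = 0\<^sub>v n \<or> vec ma w = 0\<^sub>v ma")
      case True
      have "S' = S"
      proof (rule eq_matI)
        fix b a assume "b < dim_row S" "a < dim_col S"
        hence b: "b < n" and a: "a < ma" using S by auto
        have "w a * u $ b = 0"
        proof (cases "u = 0\<^sub>v n")
          case True thus ?thesis using b by simp
        next
          case False
          hence "vec ma w = 0\<^sub>v ma" using \<open>u = 0\<^sub>v n \<or> vec ma w = 0\<^sub>v ma\<close> by simp
          hence "vec ma w $ a = 0" using a by simp
          thus ?thesis using a by simp
        qed
        thus "S' $$ (b,a) = S $$ (b,a)" using a b by (simp add: S'_def)
      qed (use S in \<open>auto simp: S'_def\<close>)
      thus ?thesis using x'C x'w x's cardU by (intro bexI[of _ x']) auto
    next
      case False
      hence u0: "u \<noteq> 0\<^sub>v n" and w0: "vec ma w \<noteq> 0\<^sub>v ma" by auto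
      obtain j \<alpha> where j: "j < nb" and uj: "u = \<alpha> \<cdot>\<^sub>v col B j" using B(2) uC u0 by blast
      obtain j' \<beta> where j': "j' < na" and wj: "vec ma w = \<beta> \<cdot>\<^sub>v col A j'" using A(2) w0 by fastforce
      define k where "k = j'*nb + j"
      have "(j'+1)*nb \<le> na*nb" using j' by (intro mult_le_mono1) simp
      hence k: "k < na*nb" using j by (simp add: k_def)
      have kmod: "k mod nb = j" and kdiv: "k div nb = j'" using j by (auto simp: k_def)
      define e where "e = vec (na*nb) (\<lambda>i. if i = k then \<alpha>*\<beta> else 0)"
      define x where "x = x' + e"
      have xC: "x \<in> carrier_vec (na*nb)" using x'C by (simp add: x_def e_def)
      have "{i. i < dim_vec x \<and> x$i \<noteq> 0} \<subseteq> insert k {i. i < dim_vec x' \<and> x'$i \<noteq> 0}"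
        using x'C by (auto simp: x_def e_def)
      hence "hamming_wt x \<le> card (insert k {i. i < dim_vec x' \<and> x'$i \<noteq> 0})"
        unfolding hamming_wt_def by (intro card_mono) auto
      also have "\<dots> \<le> Suc (hamming_wt x')" unfolding hamming_wt_def by (rule card_insert_le_m1) auto
      finally have xw: "hamming_wt x \<le> card (insert u U)" using x'w cardU by simp
      have "syn A B ma n nb x {..<na*nb} = S"
      proof (rule eq_matI)
        fix b a assume "b < dim_row S" "a < dim_col S"
        hence b: "b < n" and a: "a < ma" using S by auto
        have ub: "u $ b = \<alpha> * B$$(b,j)" using uj b B(1) j by simp
        have wa: "w a = \<beta> * A$$(a,j')"
        proof -
          have "vec ma w $ a = (\<beta> \<cdot>\<^sub>v col A j') $ a" using wj by simp
          thus ?thesis using a A(1) j' by simp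
        qed
        have "syn A B ma n nb x {..<na*nb} $$ (b,a) =
           (\<Sum>i<na*nb. x'$i * B$$(b, i mod nb) * A$$(a, i div nb)) +
           (\<Sum>i<na*nb. (if i = k then \<alpha>*\<beta> else 0) * (B$$(b, i mod nb) * A$$(a, i div nb)))"
        proof -
          have "syn A B ma n nb x {..<na*nb} $$ (b,a) = (\<Sum>i<na*nb. x'$i * B$$(b, i mod nb) * A$$(a, i div nb) +
              (if i = k then \<alpha>*\<beta> else 0) * (B$$(b, i mod nb) * A$$(a, i div nb)))"
            unfolding syn_def x_def e_def using a b x'C
            by (auto simp: distrib_right mult.assoc intro!: sum.cong)
          thus ?thesis by (simp only: sum.distrib)
        qed
        also have "(\<Sum>i<na*nb. (if i = k then \<alpha>*\<beta> else 0) * (B$$(b, i mod nb) * A$$(a, i div nb)))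
            = \<alpha>*\<beta> * (B$$(b, j) * A$$(a, j'))"
          using sum_delta_mult[OF k, of "\<alpha>*\<beta>" "\<lambda>i. B$$(b, i mod nb) * A$$(a, i div nb)"] kmod kdiv by simp
        also have "(\<Sum>i<na*nb. x'$i * B$$(b, i mod nb) * A$$(a, i div nb)) = S' $$ (b,a)"
          using x's[symmetric] a b by (simp add: syn_def)
        also have "S' $$ (b,a) = S$$(b,a) - w a * u$b" using a b by (simp add: S'_def)
        finally show "syn A B ma n nb x {..<na*nb} $$ (b,a) = S $$ (b,a)"
          unfolding ub wa by (simp add: algebra_simps)
      qed (use S in \<open>auto simp: syn_def\<close>)
      thus ?thesis using xC xw by blast
    qed
  qed
qed



lemma pcm_facts:
  fixes H :: "'a::{finite,field} mat"
  assumes "hamming_pcm H m n"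
  shows "H \<in> carrier_mat m n" "\<forall>y\<in>carrier_vec m. y \<noteq> 0\<^sub>v m \<longrightarrow> (\<exists>j<n. \<exists>c. y = c \<cdot>\<^sub>v col H j)"
    "n = (card (UNIV :: 'a set) ^ m - 1) div (card (UNIV :: 'a set) - 1)"
  using assms unfolding hamming_pcm_def by blast+

lemma wt_le_dim: "hamming_wt x \<le> dim_vec x"
proof -
  have "hamming_wt x \<le> card {..<dim_vec x}" unfolding hamming_wt_def by (rule card_mono) auto
  thus ?thesis by simp
qed

theorem mainTheorem4:
  fixes A B :: "'a::{finite,field} mat" and ma na mb nb :: nat
  assumes "hamming_pcm A ma na" and "hamming_pcm B mb nb"
    and "na \<ge> 3" and "nb \<ge> 3"
    and "C = {x \<in> carrier_vec (na * nb). kronecker A B *\<^sub>v x = 0\<^sub>v (ma * mb)}"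
    and "v \<in> carrier_vec (na * nb)"
  shows "dist_to_code v C = mat_rank (B * Vmat na nb v * transpose_mat A)"
proof -
  note Af = pcm_facts[OF assms(1)] and Bf = pcm_facts[OF assms(2)]
  have mb: "mb > 0"
  proof (rule ccontr)
    assume "\<not> mb > 0" hence "mb = 0" by simp
    hence "nb = 0" using Bf(3) by simp
    thus False using assms(4) by simp
  qed
  define N where "N = na * nb"
  have vC: "v \<in> carrier_vec N" using assms(6) N_def by simp
  define S0 where "S0 = syn A B ma mb nb v {..<na*nb}"
  have S0C: "S0 \<in> carrier_mat mb ma" by (simp add: S0_def syn_def)
  interpret V: vec_space "TYPE('a)" mb .
  have M: "B * Vmat na nb v * transpose_mat A = S0" unfolding S0_def by (rule prod_syn[OF Af(1) Bf(1)])
  have mr: "mat_rank (B * Vmat na nb v * transpose_mat A) = V.rank S0"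
    unfolding M mat_rank_def using S0C by simp
  have Cchar: "c \<in> C \<longleftrightarrow> c \<in> carrier_vec N \<and> syn A B ma mb nb c {..<na*nb} = 0\<^sub>m mb ma" for c
    using kron_syn[OF Af(1) Bf(1) _ mb, of c] assms(5) N_def by auto
  have low: "V.rank S0 \<le> hamming_wt (v - c)" if c: "c \<in> C" for c
  proof -
    have cC: "c \<in> carrier_vec N" and sc: "syn A B ma mb nb c {..<na*nb} = 0\<^sub>m mb ma" using Cchar c by auto
    have "syn A B ma mb nb (v - c) {..<na*nb} = S0 - 0\<^sub>m mb ma"
      unfolding S0_def sc[symmetric] using syn_minus[of v N c] vC cC N_def by simp
    also have "\<dots> = S0" by (rule eq_matI) (use S0C in auto)
    finally have "syn A B ma mb nb (v - c) {..<N} = S0" using N_def by simp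
    moreover have "v - c \<in> carrier_vec N" using vC cC by simp
    ultimately show ?thesis using V.rank_le_wt[of "v - c" N A B ma nb] by simp
  qed
  obtain U where U: "finite U" "U \<subseteq> carrier_vec mb" "card U = V.rank S0" "\<forall>a<ma. col S0 a \<in> V.span U"
    using V.basis_cols[OF S0C] by blast
  obtain x where xC: "x \<in> carrier_vec N" and xw: "hamming_wt x \<le> card U"
      and xs: "syn A B ma mb nb x {..<na*nb} = S0"
    using V.upper[OF Af(1) Af(2) Bf(1) Bf(2) U(1) U(2)] S0C U(4) N_def by blast
  define c where "c = v - x"
  have cC: "c \<in> carrier_vec N" using vC xC c_def by simp
  have "syn A B ma mb nb c {..<na*nb} = S0 - S0"
    unfolding c_def using syn_minus[of v N x] vC xC N_def xs S0_def by simp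
  also have "\<dots> = 0\<^sub>m mb ma" using S0C by simp
  finally have "c \<in> C" using Cchar cC by simp
  have vcx: "v - c = x" unfolding c_def by (rule eq_vecI) (use vC xC in auto)
  define I where "I = (\<lambda>c. hamming_wt (v - c)) ` C"
  have "I \<subseteq> {..N}"
  proof
    fix i assume "i \<in> I"
    then obtain c' where c': "c' \<in> C" "i = hamming_wt (v - c')" unfolding I_def by blast
    have "c' \<in> carrier_vec N" using Cchar c' by auto
    hence "dim_vec (v - c') = N" by simp
    thus "i \<in> {..N}" using wt_le_dim[of "v - c'"] c' by simp
  qed
  hence finI: "finite I" using finite_subset by blast
  have xI: "hamming_wt x \<in> I" unfolding I_def using \<open>c \<in> C\<close> vcx by force
  have "Min I \<le> V.rank S0" using Min_le[OF finI xI] xw U(3) by simp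
  moreover have "Min I \<ge> V.rank S0"
  proof -
    have "Min I \<in> I" using Min_in[OF finI] xI by blast
    then obtain c' where "c' \<in> C" "Min I = hamming_wt (v - c')" unfolding I_def by blast
    thus ?thesis using low by simp
  qed
  ultimately show ?thesis unfolding dist_to_code_def mr I_def[symmetric] by simp
qed

end
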